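(* Let $G=K(n_1,\dots,n_s)$ be a complete $s$-partite graph ($s\ge 2$) with parts $V_1,\dots,V_s$, $|V_j|=n_j$, $n_1\ge n_2\ge\cdots\ge n_s$, such that $3\le n_1\le 5$ and $n_2=1$. If $n_1\ge 4$, then there is an optimal $3$-relaxed coloring $f$ of $G$ with $|f(V_1)|=1$. If $n_1=3$, then there is an optimal $3$-relaxed coloring of $G$ which assigns the same color to the three vertices of $V_1$ and the unique vertex of $V_2$.
   Context: A map $f$ from $V(G)$ to a finite set of colors is a $3$-relaxed coloring if every vertex $u$ has at most $3$ neighbors $v$ with $f(v)=f(u)$; it is optimal if it uses the minimum possible number $\chi_3(G)$ of colors. $f(S)$ denotes the set of colors used on $S$. *)

theory Defs
  imports Main
begin

text \<open>A (finite simple) graph is given by a vertex set V and a symmetric irreflexive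
adjacency relation E.\<close>

definition relaxed_coloring :: "nat \<Rightarrow> 'a set \<Rightarrow> ('a \<Rightarrow> 'a \<Rightarrow> bool) \<Rightarrow> ('a \<Rightarrow> nat) \<Rightarrow> bool" where
  "relaxed_coloring k V E f \<longleftrightarrow> (\<forall>u\<in>V. card {v\<in>V. E u v \<and> f v = f u} \<le> k)"

definition relaxed_chromatic :: "nat \<Rightarrow> 'a set \<Rightarrow> ('a \<Rightarrow> 'a \<Rightarrow> bool) \<Rightarrow> nat" where
  "relaxed_chromatic k V E = (LEAST m. \<exists>f. relaxed_coloring k V E f \<and> card (f ` V) = m)"

definition optimal_relaxed_coloring :: "nat \<Rightarrow> 'a set \<Rightarrow> ('a \<Rightarrow> 'a \<Rightarrow> bool) \<Rightarrow> ('a \<Rightarrow> nat) \<Rightarrow> bool" where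
  "optimal_relaxed_coloring k V E f \<longleftrightarrow>
     relaxed_coloring k V E f \<and> card (f ` V) = relaxed_chromatic k V E"

text \<open>Complete s-partite graph K(n_1,...,n_s): vertices (j,i) with 1 \<le> j \<le> s, i < n j;
part V_j = {(j,i). i < n j}; two vertices are adjacent iff they lie in different parts.\<close>

definition cmp_part :: "(nat \<Rightarrow> nat) \<Rightarrow> nat \<Rightarrow> (nat \<times> nat) set" where
  "cmp_part n j = {(j, i) | i. i < n j}"

definition cmp_vertices :: "nat \<Rightarrow> (nat \<Rightarrow> nat) \<Rightarrow> (nat \<times> nat) set" where
  "cmp_vertices s n = (\<Union>j\<in>{1..s}. cmp_part n j)"

definition cmp_adj :: "nat \<times> nat \<Rightarrow> nat \<times> nat \<Rightarrow> bool" where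
  "cmp_adj u v \<longleftrightarrow> fst u \<noteq> fst v"

end

theory Submission
  imports Defs
begin

lemma mem_V: "v \<in> cmp_vertices s n \<longleftrightarrow> fst v \<in> {1..s} \<and> snd v < n (fst v)"
  unfolding cmp_vertices_def cmp_part_def by (cases v) auto

lemma part_eq: "cmp_part n j = (\<lambda>i. (j,i)) ` {..<n j}"
  unfolding cmp_part_def by auto

lemma card_part: "card (cmp_part n j) = n j"
  by (simp add: part_eq card_image inj_on_def)

lemma finite_V: "finite (cmp_vertices s n)"
  unfolding cmp_vertices_def by (simp add: part_eq)

lemma divbnd: "4 * ((x::nat) div 4) \<le> x \<and> x < 4 * (x div 4) + 4"
  by presburger

lemma lower:
  assumes s2: "s \<ge> 2" and ones: "\<forall>j\<in>{2..s}. n j = 1"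
    and rc: "relaxed_coloring 3 (cmp_vertices s n) cmp_adj f"
  shows "(s - 1) + min (n 1) 4 \<le> 4 * card (f ` cmp_vertices s n)"
proof -
  define V where "V = cmp_vertices s n"
  define S where "S = {v\<in>V. fst v \<noteq> 1}"
  define V1 where "V1 = cmp_part n 1"
  have fin: "finite V" by (simp add: V_def finite_V)
  have V1V: "V1 = {v\<in>V. fst v = 1}" using s2
    by (auto simp: V1_def V_def mem_V cmp_part_def)
  have S_eq: "S = (\<lambda>j. (j,0)) ` {2..s}"
  proof
    show "S \<subseteq> (\<lambda>j. (j,0)) ` {2..s}"
    proof
      fix v assume v: "v \<in> S"
      then have "fst v \<in> {2..s}" "snd v < n (fst v)" by (auto simp: S_def V_def mem_V)
      then have "snd v = 0" using ones by auto
      then show "v \<in> (\<lambda>j. (j,0)) ` {2..s}" using \<open>fst v \<in> {2..s}\<close>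
        by (metis image_eqI prod.collapse)
    qed
    show "(\<lambda>j. (j,0)) ` {2..s} \<subseteq> S" using ones by (auto simp: S_def V_def mem_V)
  qed
  have cardS: "card S = s - 1" by (simp add: S_eq card_image inj_on_def)
  define K where "K = f ` V"
  define A where "A = f ` V1"
  define Sc where "Sc c = {v\<in>S. f v = c}" for c
  define Ac where "Ac c = {v\<in>V1. f v = c}" for c
  have finS: "finite S" using fin by (simp add: S_def)
  have finV1: "finite V1" using fin by (simp add: V1V)
  have AK: "A \<subseteq> K" by (auto simp: A_def K_def V1V)
  have finK: "finite K" using fin by (simp add: K_def)
  have key: "card (Sc c) \<le> 4 - card (Ac c)" for c
  proof (cases "Sc c = {}")
    case True thus ?thesis by simp
  next
    case False then obtain u where u: "u \<in> Sc c" by blast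
    then have uS: "u \<in> S" and fu: "f u = c" by (auto simp: Sc_def)
    then have uV: "u \<in> V" and fu1: "fst u \<noteq> 1" by (auto simp: S_def)
    have nu: "n (fst u) = 1" using uV fu1 ones by (auto simp: V_def mem_V)
    have eq: "{v\<in>V. cmp_adj u v \<and> f v = f u} = (Sc c \<union> Ac c) - {u}"
    proof
      show "{v\<in>V. cmp_adj u v \<and> f v = f u} \<subseteq> (Sc c \<union> Ac c) - {u}"
        by (auto simp: cmp_adj_def Sc_def Ac_def S_def V1V fu)
      show "(Sc c \<union> Ac c) - {u} \<subseteq> {v\<in>V. cmp_adj u v \<and> f v = f u}"
      proof
        fix v assume v: "v \<in> (Sc c \<union> Ac c) - {u}"
        then have vV: "v \<in> V" and fv: "f v = c" and vu: "v \<noteq> u"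
          by (auto simp: Sc_def Ac_def S_def V1V)
        have "fst v \<noteq> fst u"
        proof
          assume h: "fst v = fst u"
          then have "snd v < 1" using vV nu by (auto simp: V_def mem_V)
          moreover have "snd u < 1" using uV nu by (auto simp: V_def mem_V)
          ultimately have "v = u" using h by (simp add: prod_eq_iff)
          then show False using vu by simp
        qed
        then show "v \<in> {v\<in>V. cmp_adj u v \<and> f v = f u}"
          using vV fv fu by (simp add: cmp_adj_def)
      qed
    qed
    have "card {v\<in>V. cmp_adj u v \<and> f v = f u} \<le> 3"
      using rc uV unfolding relaxed_coloring_def V_def by blast
    then have c3: "card ((Sc c \<union> Ac c) - {u}) \<le> 3" using eq by simp
    have finSA: "finite (Sc c \<union> Ac c)" using fin by (simp add: Sc_def Ac_def S_def V1V)
    have "card ((Sc c \<union> Ac c) - {u}) = card (Sc c \<union> Ac c) - 1"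
      using u finSA by simp
    moreover have "card (Sc c \<union> Ac c) = card (Sc c) + card (Ac c)"
    proof (rule card_Un_disjoint)
      show "finite (Sc c)" using finSA by simp
      show "finite (Ac c)" using finSA by simp
      show "Sc c \<inter> Ac c = {}" unfolding Sc_def Ac_def S_def V1V by blast
    qed
    moreover have "card (Sc c \<union> Ac c) \<ge> 1" using u finSA
      by (metis One_nat_def Suc_leI UnI1 card_gt_0_iff empty_iff)
    ultimately show ?thesis using c3 by linarith
  qed
  have "card S = (\<Sum>c\<in>f`S. card (Sc c))"
    using sum.image_gen[OF finS, of "\<lambda>_. (1::nat)" f] by (simp add: Sc_def)
  also have "\<dots> \<le> (\<Sum>c\<in>K. card (Sc c))"
    by (rule sum_mono2[OF finK]) (auto simp: K_def S_def)
  also have "\<dots> = (\<Sum>c\<in>K-A. card (Sc c)) + (\<Sum>c\<in>A. card (Sc c))"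
    by (rule sum.subset_diff[OF AK finK])
  finally have t1: "card S \<le> (\<Sum>c\<in>K-A. card (Sc c)) + (\<Sum>c\<in>A. card (Sc c))" .
  have t2: "(\<Sum>c\<in>K-A. card (Sc c)) \<le> card (K-A) * 4"
  proof -
    have "\<And>c. c \<in> K-A \<Longrightarrow> card (Sc c) \<le> 4" using key le_trans diff_le_self by blast
    then show ?thesis using sum_bounded_above[of "K-A" "\<lambda>c. card (Sc c)" 4] by simp
  qed
  have t3: "(\<Sum>c\<in>A. card (Sc c)) \<le> (\<Sum>c\<in>A. 4 - card (Ac c))"
    by (rule sum_mono) (rule key)
  have t4: "(\<Sum>c\<in>A. 4 - card (Ac c)) + (\<Sum>c\<in>A. min (card (Ac c)) 4) = card A * 4"
  proof -
    have "(\<Sum>c\<in>A. 4 - card (Ac c)) + (\<Sum>c\<in>A. min (card (Ac c)) 4)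
        = (\<Sum>c\<in>A. (4 - card (Ac c)) + min (card (Ac c)) 4)"
      by (simp add: sum.distrib)
    also have "\<dots> = (\<Sum>c\<in>A. (4::nat))" by (rule sum.cong) auto
    finally show ?thesis by simp
  qed
  have finA: "finite A" using finV1 by (simp add: A_def)
  have t5: "min (n 1) 4 \<le> (\<Sum>c\<in>A. min (card (Ac c)) 4)"
  proof (cases "\<exists>c\<in>A. card (Ac c) \<ge> 4")
    case True
    then obtain c where c: "c \<in> A" "card (Ac c) \<ge> 4" by blast
    have "min (card (Ac c)) 4 \<le> (\<Sum>c\<in>A. min (card (Ac c)) 4)"
      by (rule member_le_sum[OF c(1) _ finA]) simp
    then show ?thesis using c by simp
  next
    case False
    then have "(\<Sum>c\<in>A. min (card (Ac c)) 4) = (\<Sum>c\<in>A. card (Ac c))"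
      by (intro sum.cong) auto
    also have "\<dots> = card V1"
      using sum.image_gen[OF finV1, of "\<lambda>_. (1::nat)" f] by (simp add: Ac_def A_def)
    also have "\<dots> = n 1" by (simp add: V1_def card_part)
    finally show ?thesis by simp
  qed
  have t6: "card (K - A) + card A = card K"
    using card_Diff_subset[OF finite_subset[OF AK finK] AK] card_mono[OF finK AK] by simp
  show ?thesis using t1 t2 t3 t4 t5 t6 cardS unfolding K_def V_def by linarith
qed


lemma upper:
  assumes s2: "s \<ge> 2" and ones: "\<forall>j\<in>{2..s}. n j = 1"
    and d: "d = 1 \<or> d = (2::nat)" and d1: "d = 1 \<Longrightarrow> n 1 \<le> 3"
  shows "relaxed_coloring 3 (cmp_vertices s n) cmp_adj
           (\<lambda>v. if fst v = 1 then 0 else (fst v + d) div 4)"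
  unfolding relaxed_coloring_def
proof
  define g where "g = (\<lambda>v::nat\<times>nat. if fst v = 1 then 0 else (fst v + d) div 4)"
  define V where "V = cmp_vertices s n"
  have fin: "finite V" by (simp add: V_def finite_V)
  fix u assume uV: "u \<in> cmp_vertices s n"
  show "card {v \<in> cmp_vertices s n. cmp_adj u v \<and> g v = g u} \<le> 3"
  proof (cases "fst u = 1")
    case True
    have "{v \<in> cmp_vertices s n. cmp_adj u v \<and> g v = g u} \<subseteq> {(2,0)}"
    proof
      fix v assume v: "v \<in> {v \<in> cmp_vertices s n. cmp_adj u v \<and> g v = g u}"
      then have f1: "fst v \<noteq> 1" "(fst v + d) div 4 = 0" "fst v \<in> {1..s}" "snd v < n (fst v)"
        using True by (auto simp: cmp_adj_def g_def mem_V)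
      then have "fst v = 2" using d by auto
      moreover then have "snd v = 0" using f1 ones s2 by auto
      ultimately show "v \<in> {(2,0)}" by (simp add: prod_eq_iff)
    qed
    then have "card {v \<in> cmp_vertices s n. cmp_adj u v \<and> g v = g u} \<le> card {(2::nat,0::nat)}"
      by (intro card_mono) auto
    then show ?thesis by simp
  next
    case False
    define j where "j = fst u"
    define q where "q = (j + d) div 4"
    have j: "j \<in> {2..s}" using uV False by (auto simp: j_def mem_V)
    have gu: "g u = q" using False by (simp add: g_def j_def q_def)
    show ?thesis
    proof (cases "q = 0")
      case True
      then have jd: "j = 2" "d = 1" using j d by (auto simp: q_def)
      have "{v \<in> cmp_vertices s n. cmp_adj u v \<and> g v = g u} \<subseteq> cmp_part n 1"
      proof
        fix v assume v: "v \<in> {v \<in> cmp_vertices s n. cmp_adj u v \<and> g v = g u}"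
        then have f1: "fst v \<noteq> 2" "g v = 0" "fst v \<in> {1..s}" "snd v < n (fst v)"
          using True gu jd by (auto simp: cmp_adj_def mem_V j_def)
        have "fst v = 1"
        proof (rule ccontr)
          assume "fst v \<noteq> 1"
          then have "(fst v + 1) div 4 = 0" using f1 jd by (simp add: g_def)
          then show False using f1 \<open>fst v \<noteq> 1\<close> by auto
        qed
        then show "v \<in> cmp_part n 1" using f1 unfolding cmp_part_def
          by (metis (mono_tags, lifting) mem_Collect_eq prod.collapse)
      qed
      then have "card {v \<in> cmp_vertices s n. cmp_adj u v \<and> g v = g u} \<le> card (cmp_part n 1)"
        by (intro card_mono) (auto simp: part_eq)
      then show ?thesis using d1 jd by (simp add: card_part)
    next
      case False
      have qb: "4*q \<le> j + d" "j + d < 4*q + 4" using divbnd[of "j+d"] by (auto simp: q_def)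
      have sub: "{v \<in> cmp_vertices s n. cmp_adj u v \<and> g v = g u}
          \<subseteq> (\<lambda>j'. (j',0::nat)) ` ({4*q-d..4*q+3-d} - {j})"
      proof
        fix v assume v: "v \<in> {v \<in> cmp_vertices s n. cmp_adj u v \<and> g v = g u}"
        then have f1: "fst v \<noteq> j" "g v = q" "fst v \<in> {1..s}" "snd v < n (fst v)"
          using gu by (auto simp: cmp_adj_def mem_V j_def)
        have "fst v \<noteq> 1" using f1 False by (auto simp: g_def)
        then have q2: "(fst v + d) div 4 = q" using f1 by (simp add: g_def)
        have "snd v = 0" using f1 \<open>fst v \<noteq> 1\<close> ones by auto
        moreover have "fst v \<in> {4*q-d..4*q+3-d} - {j}"
          using divbnd[of "fst v + d"] q2 f1 by auto
        ultimately show "v \<in> (\<lambda>j'. (j',0::nat)) ` ({4*q-d..4*q+3-d} - {j})"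
          by (metis image_eqI prod.collapse)
      qed
      have "card {v \<in> cmp_vertices s n. cmp_adj u v \<and> g v = g u}
          \<le> card ((\<lambda>j'. (j',0::nat)) ` ({4*q-d..4*q+3-d} - {j}))"
        by (rule card_mono[OF _ sub]) simp
      also have "\<dots> \<le> card ({4*q-d..4*q+3-d} - {j})" by (rule card_image_le) simp
      also have "\<dots> = card {4*q-d..4*q+3-d} - 1"
        using qb False by (intro card_Diff_singleton) auto
      also have "\<dots> = 3" using False d by auto
      finally show ?thesis .
    qed
  qed
qed


lemma main_aux:
  assumes s2: "s \<ge> 2" and ones: "\<forall>j\<in>{2..s}. n j = 1"
    and d: "d = 1 \<or> d = (2::nat)" and d1: "d = 1 \<Longrightarrow> n 1 = 3"
    and d2: "d = 2 \<Longrightarrow> n 1 \<ge> 4"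
  shows "optimal_relaxed_coloring 3 (cmp_vertices s n) cmp_adj
           (\<lambda>v. if fst v = 1 then 0 else (fst v + d) div 4)"
proof -
  define g where "g = (\<lambda>v::nat\<times>nat. if fst v = 1 then 0 else (fst v + d) div 4)"
  define V where "V = cmp_vertices s n"
  have rc: "relaxed_coloring 3 V cmp_adj g"
    unfolding g_def V_def by (rule upper[OF s2 ones d]) (use d1 in simp)
  have img: "g ` V \<subseteq> {0..(s+d) div 4}"
  proof
    fix c assume "c \<in> g ` V"
    then obtain v where v: "v \<in> V" "c = g v" by blast
    then have "fst v \<le> s" by (auto simp: V_def mem_V)
    then have "(fst v + d) div 4 \<le> (s + d) div 4" by (intro div_le_mono) simp
    then show "c \<in> {0..(s+d) div 4}" using v by (simp add: g_def)
  qed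
  have cg: "card (g ` V) \<le> (s+d) div 4 + 1"
    using card_mono[OF _ img] by simp
  define k where "k = relaxed_chromatic 3 V cmp_adj"
  have ex: "\<exists>f. relaxed_coloring 3 V cmp_adj f \<and> card (f ` V) = k"
    unfolding k_def relaxed_chromatic_def
    by (rule LeastI_ex) (use rc in blast)
  then obtain f where f: "relaxed_coloring 3 V cmp_adj f" "card (f ` V) = k" by blast
  have lb: "(s - 1) + min (n 1) 4 \<le> 4 * k"
    using lower[OF s2 ones, of f] f by (simp add: V_def)
  have kle: "k \<le> card (g ` V)"
    unfolding k_def relaxed_chromatic_def by (rule Least_le) (use rc in blast)
  have "(s+d) div 4 + 1 \<le> k"
    using lb d d1 d2 divbnd[of "s+d"] by auto
  then have "card (g ` V) = k" using cg kle by simp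
  then show ?thesis using rc unfolding optimal_relaxed_coloring_def k_def g_def V_def by simp
qed

theorem lemma5p5:
  fixes s :: nat and n :: "nat \<Rightarrow> nat"
  assumes "s \<ge> 2"
    and "\<forall>j\<in>{1..s}. n j \<ge> 1"
    and "\<forall>j\<in>{1..s}. \<forall>j'\<in>{1..s}. j \<le> j' \<longrightarrow> n j' \<le> n j"
    and "3 \<le> n 1" and "n 1 \<le> 5" and "n 2 = 1"
  shows "(n 1 \<ge> 4 \<longrightarrow>
            (\<exists>f. optimal_relaxed_coloring 3 (cmp_vertices s n) cmp_adj f
                 \<and> card (f ` cmp_part n 1) = 1))
       \<and> (n 1 = 3 \<longrightarrow>
            (\<exists>f. optimal_relaxed_coloring 3 (cmp_vertices s n) cmp_adj f
                 \<and> (\<exists>c. \<forall>v \<in> cmp_part n 1 \<union> cmp_part n 2. f v = c)))"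
proof -
  have ones: "\<forall>j\<in>{2..s}. n j = 1"
  proof
    fix j assume j: "j \<in> {2..s}"
    then have "n j \<le> n 2" using assms(1,3) by auto
    moreover have "n j \<ge> 1" using j assms(2) by auto
    ultimately show "n j = 1" using assms(6) by simp
  qed
  show ?thesis
  proof (intro conjI impI)
    assume h: "n 1 \<ge> 4"
    define g where "g = (\<lambda>v::nat\<times>nat. if fst v = 1 then 0 else (fst v + 2) div 4)"
    have "optimal_relaxed_coloring 3 (cmp_vertices s n) cmp_adj g"
      unfolding g_def by (rule main_aux[OF assms(1) ones]) (use h in auto)
    moreover have "g ` cmp_part n 1 = {0}" using h
      by (auto simp: g_def part_eq image_iff intro!: exI[of _ 0])
    ultimately show "\<exists>f. optimal_relaxed_coloring 3 (cmp_vertices s n) cmp_adj f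
                 \<and> card (f ` cmp_part n 1) = 1" by auto
  next
    assume h: "n 1 = 3"
    define g where "g = (\<lambda>v::nat\<times>nat. if fst v = 1 then 0 else (fst v + 1) div 4)"
    have "optimal_relaxed_coloring 3 (cmp_vertices s n) cmp_adj g"
      unfolding g_def by (rule main_aux[OF assms(1) ones]) (use h in auto)
    moreover have "\<forall>v \<in> cmp_part n 1 \<union> cmp_part n 2. g v = 0"
      by (auto simp: g_def cmp_part_def)
    ultimately show "\<exists>f. optimal_relaxed_coloring 3 (cmp_vertices s n) cmp_adj f
                 \<and> (\<exists>c. \<forall>v \<in> cmp_part n 1 \<union> cmp_part n 2. f v = c)" by blast
  qed
qed

end
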